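(* Let $\mathfrak g$ be a finite-dimensional two-step solvable Lie algebra over a field of characteristic zero with $\mathfrak g^\infty=\mathfrak g^3$. Then $\mathfrak g$ admits an LR-structure.
   Context: Two-step solvable means $[[\mathfrak g,\mathfrak g],[\mathfrak g,\mathfrak g]]=0$. Lower central series: $\mathfrak g^1=\mathfrak g$, $\mathfrak g^{i+1}=[\mathfrak g,\mathfrak g^i]$, $\mathfrak g^\infty=\bigcap_i\mathfrak g^i$. An LR-structure on a Lie algebra $\mathfrak g$ is a bilinear product $\cdot$ on its underlying space with $x\cdot(y\cdot z)=y\cdot(x\cdot z)$, $(x\cdot y)\cdot z=(x\cdot z)\cdot y$ and $x\cdot y-y\cdot x=[x,y]$ for all $x,y,z$. *)

theory Defs
  imports Complex_Main
begin

definition bilinear_map :: "('k::field \<Rightarrow> 'v::ab_group_add \<Rightarrow> 'v) \<Rightarrow> ('v \<Rightarrow> 'v \<Rightarrow> 'v) \<Rightarrow> bool" where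
  "bilinear_map scale f \<longleftrightarrow>
     (\<forall>x. Vector_Spaces.linear scale scale (f x)) \<and> (\<forall>y. Vector_Spaces.linear scale scale (\<lambda>x. f x y))"

definition lie_algebra :: "('k::field \<Rightarrow> 'v::ab_group_add \<Rightarrow> 'v) \<Rightarrow> ('v \<Rightarrow> 'v \<Rightarrow> 'v) \<Rightarrow> bool" where
  "lie_algebra scale br \<longleftrightarrow>
     vector_space scale \<and> bilinear_map scale br \<and> (\<forall>x. br x x = 0) \<and>
     (\<forall>x y z. br x (br y z) + br y (br z x) + br z (br x y) = 0)"

definition finite_dim :: "('k::field \<Rightarrow> 'v::ab_group_add \<Rightarrow> 'v) \<Rightarrow> bool" where
  "finite_dim scale \<longleftrightarrow> (\<exists>B. finite_dimensional_vector_space scale B)"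

text \<open>Lower central series: g^1 = g, g^(i+1) = [g, g^i] (linear span of brackets).
  The index 0 is given the value g as well (unused convention).\<close>

fun lower_central :: "('k::field \<Rightarrow> 'v::ab_group_add \<Rightarrow> 'v) \<Rightarrow> ('v \<Rightarrow> 'v \<Rightarrow> 'v) \<Rightarrow> nat \<Rightarrow> 'v set" where
  "lower_central scale br 0 = UNIV"
| "lower_central scale br (Suc 0) = UNIV"
| "lower_central scale br (Suc (Suc n)) =
     module.span scale {br x y | x y. y \<in> lower_central scale br (Suc n)}"

definition lower_central_inf :: "('k::field \<Rightarrow> 'v::ab_group_add \<Rightarrow> 'v) \<Rightarrow> ('v \<Rightarrow> 'v \<Rightarrow> 'v) \<Rightarrow> 'v set" where
  "lower_central_inf scale br = (\<Inter>i\<in>{1..}. lower_central scale br i)"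

definition derived_algebra :: "('k::field \<Rightarrow> 'v::ab_group_add \<Rightarrow> 'v) \<Rightarrow> ('v \<Rightarrow> 'v \<Rightarrow> 'v) \<Rightarrow> 'v set" where
  "derived_algebra scale br = module.span scale {br x y | x y. True}"

definition two_step_solvable :: "('k::field \<Rightarrow> 'v::ab_group_add \<Rightarrow> 'v) \<Rightarrow> ('v \<Rightarrow> 'v \<Rightarrow> 'v) \<Rightarrow> bool" where
  "two_step_solvable scale br \<longleftrightarrow>
     (\<forall>x\<in>derived_algebra scale br. \<forall>y\<in>derived_algebra scale br. br x y = 0)"

definition is_LR_structure :: "('k::field \<Rightarrow> 'v::ab_group_add \<Rightarrow> 'v) \<Rightarrow> ('v \<Rightarrow> 'v \<Rightarrow> 'v) \<Rightarrow> ('v \<Rightarrow> 'v \<Rightarrow> 'v) \<Rightarrow> bool" where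
  "is_LR_structure scale br p \<longleftrightarrow>
     bilinear_map scale p \<and>
     (\<forall>x y z. p x (p y z) = p y (p x z)) \<and>
     (\<forall>x y z. p (p x y) z = p (p x z) y) \<and>
     (\<forall>x y. p x y - p y x = br x y)"

end

theory Submission
  imports Defs
begin



locale LA = finite_dimensional_vector_space scale Bs
  for scale :: "'k::field_char_0 \<Rightarrow> 'v::ab_group_add \<Rightarrow> 'v" and Bs +
  fixes br :: "'v \<Rightarrow> 'v \<Rightarrow> 'v"
  assumes linR: "\<And>x. Vector_Spaces.linear scale scale (br x)"
    and linL: "\<And>y. Vector_Spaces.linear scale scale (\<lambda>x. br x y)"
    and alt: "\<And>x. br x x = 0"
    and jac: "\<And>x y z. br x (br y z) + br y (br z x) + br z (br x y) = 0"
    and ab: "\<And>u v. u \<in> span {br x y | x y. True} \<Longrightarrow> v \<in> span {br x y | x y. True} \<Longrightarrow> br u v = 0"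
    and g34: "span {br z u | z u. u \<in> span {br x y | x y. True}}
       \<subseteq> span {br z w | z w. w \<in> span {br z u | z u. u \<in> span {br x y | x y. True}}}"
begin

abbreviation lin where "lin f \<equiv> Vector_Spaces.linear scale scale f"

definition AA where "AA = span {br x y | x y. True}"

sublocale vp: vector_space_pair scale scale by unfold_locales

lemma lin_add: "lin f \<Longrightarrow> f (x + y) = f x + f y" by (rule vp.linear_add)
lemma lin_diff: "lin f \<Longrightarrow> f (x - y) = f x - f y" by (rule vp.linear_diff)
lemma lin_0: "lin f \<Longrightarrow> f 0 = 0" by (rule vp.linear_0)
lemma lin_neg: "lin f \<Longrightarrow> f (- x) = - f x" by (rule vp.linear_neg)
lemma lin_scale: "lin f \<Longrightarrow> f (scale c x) = scale c (f x)" by (rule vp.linear_scale)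
lemma lin_comp: "lin f \<Longrightarrow> lin g \<Longrightarrow> lin (\<lambda>x. f (g x))"
  using Vector_Spaces.linear_compose[of scale scale g scale f] by (simp add: comp_def)
lemma lin_addf: "lin f \<Longrightarrow> lin g \<Longrightarrow> lin (\<lambda>x. f x + g x)" by (rule vp.linear_compose_add)
lemma lin_subf: "lin f \<Longrightarrow> lin g \<Longrightarrow> lin (\<lambda>x. f x - g x)" by (rule vp.linear_compose_sub)
lemma lin_id: "lin (\<lambda>x. x)" by (rule linear_ident)
lemma lin_zero: "lin (\<lambda>x. 0)" by (rule vp.linear_zero)
lemma lin_scalef: "lin f \<Longrightarrow> lin (\<lambda>x. scale c (f x))" by (rule vp.linear_compose_scale_right)
lemma lin_pow: "lin f \<Longrightarrow> lin (f ^^ k)"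
proof (induction k)
  case 0 then show ?case using lin_id by (simp add: id_def)
next
  case (Suc k) then show ?case using lin_comp[of f "f^^k"] by (simp add: comp_def)
qed
lemma lin_span_image: "lin f \<Longrightarrow> span (f ` S) = f ` span S" by (rule vp.linear_span_image)
lemma lin_subspace_image: "lin f \<Longrightarrow> subspace S \<Longrightarrow> subspace (f ` S)" by (rule vp.linear_subspace_image)

lemma br_addR: "br x (y + z) = br x y + br x z" using lin_add[OF linR] .
lemma br_addL: "br (x + y) z = br x z + br y z" using lin_add[OF linL[of z], of x y] .
lemma br_diffR: "br x (y - z) = br x y - br x z" using lin_diff[OF linR] .
lemma br_diffL: "br (x - y) z = br x z - br y z" using lin_diff[OF linL[of z], of x y] .
lemma br_0R[simp]: "br x 0 = 0" using lin_0[OF linR] .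
lemma br_0L[simp]: "br 0 x = 0" using lin_0[OF linL[of x]] .
lemma br_scaleR: "br x (scale c y) = scale c (br x y)" using lin_scale[OF linR] .
lemma br_scaleL: "br (scale c x) y = scale c (br x y)" using lin_scale[OF linL[of y], of c x] .
lemma br_anti: "br y x = - br x y"
proof -
  have "br (x + y) (x + y) = 0" by (rule alt)
  moreover have "br (x + y) (x + y) = br x x + br x y + (br y x + br y y)" by (simp add: br_addL br_addR)
  ultimately have "br x y + br y x = 0" by (simp add: alt)
  then show ?thesis by (simp add: eq_neg_iff_add_eq_0 add.commute)
qed

lemma AA_sub: "subspace AA" unfolding AA_def by simp
lemma br_AA[simp]: "br x y \<in> AA" unfolding AA_def by (rule span_base) auto
lemma ab': "u \<in> AA \<Longrightarrow> v \<in> AA \<Longrightarrow> br u v = 0" using ab unfolding AA_def .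

lemma comm: "u \<in> AA \<Longrightarrow> br x (br y u) = br y (br x u)"
proof -
  assume u: "u \<in> AA"
  have "br x (br y u) + br y (br u x) + br u (br x y) = 0" by (rule jac)
  moreover have "br u (br x y) = 0" using ab'[OF u br_AA] .
  moreover have "br u x = - br x u" by (rule br_anti)
  ultimately show ?thesis by (simp add: lin_neg[OF linR] eq_neg_iff_add_eq_0[symmetric])
qed

lemma jac2: "br y (br x z) - br z (br x y) = br x (br y z)"
proof -
  have "br x (br y z) + br y (br z x) + br z (br x y) = 0" by (rule jac)
  moreover have "br z x = - br x z" by (rule br_anti)
  ultimately show ?thesis by (simp add: lin_neg[OF linR] algebra_simps eq_neg_iff_add_eq_0[symmetric])
qed

lemma comm_pow: "u \<in> AA \<Longrightarrow> br y ((br x ^^ j) u) = (br x ^^ j) (br y u)"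
proof (induction j)
  case 0 then show ?case by simp
next
  case (Suc j)
  have "(br x ^^ j) u \<in> AA" using Suc.prems by (cases j) auto
  then show ?case using Suc by (simp add: comm)
qed

end


context LA begin

lemma surj_inj:
  assumes f: "lin f" and I: "subspace I" and fI: "f ` I = I"
  shows "inj_on f I"
proof -
  obtain B where B: "B \<subseteq> I" "independent B" "I \<subseteq> span B" "card B = dim I"
    using basis_exists by blast
  have fin: "finite B" using B(2) finiteI_independent by blast
  have spB: "span B = I" using B span_minimal[OF B(1) I] by auto
  have spfB: "span (f ` B) = I" using lin_span_image[OF f] spB fI by simp
  have fBI: "f ` B \<subseteq> I" using B(1) fI by auto
  have "dim I \<le> card (f ` B)"
    by (rule span_card_ge_dim) (use fBI spfB fin in auto)
  moreover have "card (f ` B) \<le> card B" by (rule card_image_le[OF fin])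
  ultimately have ceq: "card (f ` B) = card B" using B(4) by simp
  have inj: "inj_on f B" using eq_card_imp_inj_on[OF fin ceq] .
  have ind: "independent (f ` B)"
    using card_eq_dim[of "f ` B" I] fBI ceq B(4) fin spfB by auto
  show ?thesis
  proof (rule inj_onI)
    fix x y assume xy: "x \<in> I" "y \<in> I" "f x = f y"
    have "f (x - y) = 0" using xy lin_diff[OF f] by simp
    moreover have "x - y \<in> span B" using xy spB I subspace_diff by blast
    ultimately have "x - y = 0"
      using vp.linear_indep_image_lemma[OF f fin ind inj] by blast
    then show "x = y" by simp
  qed
qed

lemma fitting:
  assumes K: "subspace K" "K \<subseteq> AA" and inv: "\<And>y v. v \<in> K \<Longrightarrow> br y v \<in> K"
    and nn: "\<not> (\<exists>k. \<forall>v\<in>K. (br x ^^ k) v = 0)"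
  shows "\<exists>q S. lin q \<and> lin S \<and> (\<forall>v\<in>K. q v \<in> K \<and> q (q v) = q v \<and> (\<forall>y. q (br y v) = br y (q v)))
     \<and> (\<forall>w\<in>K. q w = w \<longrightarrow> S w \<in> K \<and> q (S w) = S w \<and> br x (S w) = w \<and> S (br x w) = w)
     \<and> (\<exists>v\<in>K. q v \<noteq> 0)"
proof -
  define R where "R k = (br x ^^ k)" for k
  have linR': "lin (R k)" for k using lin_pow[OF linR] R_def by simp
  have RS: "R (Suc k) v = br x (R k v)" for k v by (simp add: R_def)
  have RS': "R (Suc k) v = R k (br x v)" for k v unfolding R_def funpow_Suc_right by simp
  have RK: "v \<in> K \<Longrightarrow> R k v \<in> K" for k v
    by (induction k) (auto simp: R_def inv)
  define d where "d k = dim (R k ` K)" for k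
  have "\<exists>k. d k = (LEAST m. \<exists>k. d k = m)" by (rule LeastI_ex) auto
  then obtain k where k: "d k = (LEAST m. \<exists>k. d k = m)" ..
  have kmin: "d k \<le> d j" for j unfolding k by (rule Least_le) auto
  define I where "I = R k ` K"
  have Isub: "subspace I" unfolding I_def by (rule lin_subspace_image[OF linR' K(1)])
  have IK: "I \<subseteq> K" unfolding I_def using RK by auto
  have s1: "subspace (R (Suc k) ` K)" by (rule lin_subspace_image[OF linR' K(1)])
  have s2: "R (Suc k) ` K \<subseteq> I" unfolding I_def using RS' inv by auto
  have eqI: "R (Suc k) ` K = I"
    by (rule subspace_dim_equal[OF s1 Isub s2]) (use kmin[of "Suc k"] in \<open>simp add: d_def I_def\<close>)
  have TI: "br x ` I = I"
  proof -
    have "br x ` I = R (Suc k) ` K" unfolding I_def by (auto simp: RS image_iff)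
    then show ?thesis using eqI by simp
  qed
  have TIj: "(br x ^^ j) ` I = I" for j
  proof (induction j)
    case 0 then show ?case by simp
  next
    case (Suc j)
    have "(br x ^^ Suc j) ` I = br x ` ((br x ^^ j) ` I)" by (simp add: image_comp)
    then show ?case using Suc TI by simp
  qed
  have RI: "R k ` I = I" using TIj R_def by simp
  have injT: "inj_on (br x) I" by (rule surj_inj[OF linR Isub TI])
  have injR: "inj_on (R k) I" by (rule surj_inj[OF linR' Isub RI])
  obtain S where S: "S ` UNIV \<subseteq> I" "lin S" "\<forall>v\<in>I. S (br x v) = v"
    using vp.linear_exists_left_inverse_on[OF linR Isub injT] by blast
  obtain G where G: "G ` UNIV \<subseteq> I" "lin G" "\<forall>v\<in>I. G (R k v) = v"
    using vp.linear_exists_left_inverse_on[OF linR' Isub injR] by blast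
  define q where "q v = G (R k v)" for v
  have linq: "lin q" unfolding q_def by (rule lin_comp[OF G(2) linR'])
  have key: "q v \<in> I \<and> R k (q v) = R k v" if "v \<in> K" for v
  proof -
    have "R k v \<in> R k ` I" using that RI I_def by auto
    then obtain u where u: "u \<in> I" "R k v = R k u" by auto
    then show ?thesis using G(3) q_def by simp
  qed
  have Iinv: "br y w \<in> I" if wI: "w \<in> I" for y w
  proof -
    obtain v where v: "v \<in> K" "w = R k v" using wI I_def by auto
    have "br y w = R k (br y v)" using v comm_pow[where u=v and y=y and x=x and j=k] K(2) R_def by auto
    then show ?thesis using v inv I_def by auto
  qed
  have qI: "w \<in> I \<Longrightarrow> q w = w" for w using G(3) q_def by simp
  show ?thesis
  proof (intro exI conjI ballI allI impI)
    show "lin q" by (fact linq)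
    show "lin S" by (fact S(2))
    fix v assume v: "v \<in> K"
    show "q v \<in> K" using key[OF v] IK by auto
    show "q (q v) = q v" using key[OF v] qI by auto
    fix y
    have u: "q v \<in> I" "R k (q v) = R k v" using key[OF v] by auto
    have "R k (br y v) = br y (R k v)" using comm_pow[where u=v and y=y and x=x and j=k] v K(2) R_def by auto
    also have "\<dots> = br y (R k (q v))" using u by simp
    also have "\<dots> = R k (br y (q v))" using comm_pow[where u="q v" and y=y and x=x and j=k] u IK K(2) R_def by auto
    finally have "G (R k (br y v)) = G (R k (br y (q v)))" by simp
    then show "q (br y v) = br y (q v)" using G(3) Iinv[OF u(1)] q_def by simp
  next
    fix w assume w: "w \<in> K" "q w = w"
    have wI: "w \<in> I" using key[OF w(1)] w(2) by simp
    show "S w \<in> K" using S(1) IK by auto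
    show "q (S w) = S w" using S(1) qI by auto
    obtain u where u: "u \<in> I" "w = br x u" using wI TI by (metis imageE)
    show "br x (S w) = w" using u S(3) by simp
    show "S (br x w) = w" using wI S(3) by simp
  next
    obtain v where v: "v \<in> K" "R k v \<noteq> 0" using nn R_def by auto
    have "q v \<noteq> 0"
    proof
      assume "q v = 0"
      then have "R k v = R k 0" using key[OF v(1)] by simp
      then show False using v(2) lin_0[OF linR'] by simp
    qed
    then show "\<exists>v\<in>K. q v \<noteq> 0" using v by auto
  qed
qed

end


context LA begin

definition good where
  "good p h \<longleftrightarrow> lin p \<and> lin h \<and>
     (\<forall>v\<in>AA. p v \<in> AA \<and> p (p v) = p v \<and> (\<forall>y. p (br y v) = br y (p v))) \<and>
     (\<forall>w. h w \<in> AA \<and> p (h w) = h w) \<and>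
     (\<forall>y z. p (br y z) = br y (h z) - br z (h y))"

definition Kset where "Kset p = {v \<in> AA. p v = 0}"

lemma AA_0: "0 \<in> AA" using AA_sub subspace_0 by blast
lemma AA_add: "u \<in> AA \<Longrightarrow> v \<in> AA \<Longrightarrow> u + v \<in> AA" using AA_sub subspace_add by blast
lemma AA_diff: "u \<in> AA \<Longrightarrow> v \<in> AA \<Longrightarrow> u - v \<in> AA" using AA_sub subspace_diff by blast
lemma AA_scale: "u \<in> AA \<Longrightarrow> scale c u \<in> AA" using AA_sub subspace_scale by blast

lemma Kset_props:
  assumes "good p h"
  shows "subspace (Kset p)" "Kset p \<subseteq> AA" "\<And>y v. v \<in> Kset p \<Longrightarrow> br y v \<in> Kset p"
proof -
  have lp: "lin p" using assms good_def by blast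
  show "subspace (Kset p)" unfolding subspace_def Kset_def
    using lin_add[OF lp] lin_scale[OF lp] lin_0[OF lp] AA_0 AA_add AA_scale by auto
  show "Kset p \<subseteq> AA" unfolding Kset_def by auto
  fix y v assume "v \<in> Kset p"
  then show "br y v \<in> Kset p" using assms unfolding good_def Kset_def by auto
qed

lemma good_step:
  assumes g: "good p h" and nn: "\<not> (\<exists>k. \<forall>v\<in>Kset p. (br x ^^ k) v = 0)"
  shows "\<exists>p' h'. good p' h' \<and> Kset p' \<subset> Kset p"
proof -
  let ?K = "Kset p"
  note KP = Kset_props[OF g]
  from g have lp: "lin p" and lh: "lin h"
    and pA: "\<And>v. v \<in> AA \<Longrightarrow> p v \<in> AA" and pp: "\<And>v. v \<in> AA \<Longrightarrow> p (p v) = p v"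
    and pc: "\<And>v y. v \<in> AA \<Longrightarrow> p (br y v) = br y (p v)"
    and hA: "\<And>w. h w \<in> AA" and ph: "\<And>w. p (h w) = h w"
    and coc: "\<And>y z. p (br y z) = br y (h z) - br z (h y)"
    unfolding good_def by blast+
  obtain q S where fq: "lin q \<and> lin S \<and> (\<forall>v\<in>?K. q v \<in> ?K \<and> q (q v) = q v \<and> (\<forall>y. q (br y v) = br y (q v)))
     \<and> (\<forall>w\<in>?K. q w = w \<longrightarrow> S w \<in> ?K \<and> q (S w) = S w \<and> br x (S w) = w \<and> S (br x w) = w)
     \<and> (\<exists>v\<in>?K. q v \<noteq> 0)"
    using fitting[OF KP(1) KP(2) KP(3) nn] by blast
  have lq: "lin q" and lS: "lin S" using fq by blast+
  have qK: "\<And>v. v \<in> ?K \<Longrightarrow> q v \<in> ?K" and qq: "\<And>v. v \<in> ?K \<Longrightarrow> q (q v) = q v"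
    and qc: "\<And>v y. v \<in> ?K \<Longrightarrow> q (br y v) = br y (q v)"
    using fq by blast+
  have SK: "\<And>w. w \<in> ?K \<Longrightarrow> q w = w \<Longrightarrow> S w \<in> ?K"
    and qS: "\<And>w. w \<in> ?K \<Longrightarrow> q w = w \<Longrightarrow> q (S w) = S w"
    and xS: "\<And>w. w \<in> ?K \<Longrightarrow> q w = w \<Longrightarrow> br x (S w) = w"
    and Sx: "\<And>w. w \<in> ?K \<Longrightarrow> q w = w \<Longrightarrow> S (br x w) = w"
    using fq by blast+
  have nz: "\<exists>v\<in>?K. q v \<noteq> 0" using fq by blast
  have KA: "v \<in> ?K \<Longrightarrow> v \<in> AA" for v using KP(2) by auto
  have Kp: "v \<in> ?K \<Longrightarrow> p v = 0" for v by (simp add: Kset_def)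
  define pi where "pi v = q (v - p v)" for v
  have lpi: "lin pi" unfolding pi_def by (rule lin_comp[OF lq lin_subf[OF lin_id lp]])
  have sK: "v \<in> AA \<Longrightarrow> v - p v \<in> ?K" for v
    unfolding Kset_def using AA_diff pA pp lin_diff[OF lp] by auto
  have piK: "v \<in> AA \<Longrightarrow> pi v \<in> ?K" for v using sK qK pi_def by simp
  have qpi: "v \<in> AA \<Longrightarrow> q (pi v) = pi v" for v using sK qq pi_def by simp
  have pic: "v \<in> AA \<Longrightarrow> pi (br y v) = br y (pi v)" for v y
  proof -
    assume v: "v \<in> AA"
    have "br y v - p (br y v) = br y (v - p v)" using pc[OF v] br_diffR by simp
    then show ?thesis using qc[OF sK[OF v]] pi_def by simp
  qed
  have Sc: "br y (S w) = S (br y w)" if w: "w \<in> ?K" "q w = w" for y w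
  proof -
    have bw: "br y w \<in> ?K" "q (br y w) = br y w" using KP(3) w qc by auto
    let ?u = "br y (S w)"
    have u: "?u \<in> ?K" "q ?u = ?u" using KP(3) SK[OF w] qc[OF SK[OF w]] qS[OF w] by auto
    have "br x ?u = br y (br x (S w))" using comm KA[OF SK[OF w]] by blast
    also have "\<dots> = br y w" using xS[OF w] by simp
    finally have "S (br x ?u) = S (br y w)" by simp
    then show ?thesis using Sx[OF u] by simp
  qed
  define p' where "p' v = p v + pi v" for v
  define h' where "h' w = h w + S (pi (br x w))" for w
  have pis: "pi (br x w) \<in> ?K" "q (pi (br x w)) = pi (br x w)" for w using piK qpi by auto
  have g': "good p' h'"
    unfolding good_def
  proof (intro conjI ballI allI)
    show "lin p'" unfolding p'_def by (rule lin_addf[OF lp lpi])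
    show "lin h'" unfolding h'_def by (rule lin_addf[OF lh lin_comp[OF lS lin_comp[OF lpi linR]]])
    fix v assume v: "v \<in> AA"
    show "p' v \<in> AA" unfolding p'_def using pA[OF v] piK[OF v] KA AA_add by blast
    have "p (pi v) = 0" using Kp piK v by blast
    then have a: "p (p v + pi v) = p v" using lin_add[OF lp] pp[OF v] by simp
    show "p' (p' v) = p' v" unfolding p'_def
      using a qpi[OF v] by (simp add: pi_def)
    fix y
    show "p' (br y v) = br y (p' v)" unfolding p'_def using pc[OF v] pic[OF v] br_addR by simp
  next
    fix w
    have Sw: "S (pi (br x w)) \<in> ?K" using SK pis by blast
    show "h' w \<in> AA" unfolding h'_def using hA KA[OF Sw] AA_add by blast
    have a: "p (h' w) = h w" unfolding h'_def using lin_add[OF lp] ph Kp[OF Sw] by simp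
    have b: "h' w - p (h' w) = S (pi (br x w))" using a by (simp add: h'_def)
    show "p' (h' w) = h' w" unfolding p'_def
      using a b qS[OF pis] by (simp add: pi_def h'_def)
  next
    fix y z
    have e1: "br y (S (pi (br x z))) = S (pi (br y (br x z)))"
      using Sc[OF pis] pic by simp
    have e2: "br z (S (pi (br x y))) = S (pi (br z (br x y)))"
      using Sc[OF pis] pic by simp
    have "br y (S (pi (br x z))) - br z (S (pi (br x y))) = S (pi (br y (br x z) - br z (br x y)))"
      using e1 e2 lin_diff[OF lS] lin_diff[OF lpi] by simp
    also have "\<dots> = S (pi (br x (br y z)))" using jac2 by simp
    also have "\<dots> = S (br x (pi (br y z)))" using pic by simp
    also have "\<dots> = pi (br y z)" using Sx piK qpi by simp
    finally have e: "pi (br y z) = br y (S (pi (br x z))) - br z (S (pi (br x y)))" by simp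
    show "p' (br y z) = br y (h' z) - br z (h' y)"
      unfolding p'_def h'_def coc e by (simp add: br_addR)
  qed
  have sub: "Kset p' \<subseteq> ?K"
  proof
    fix v assume "v \<in> Kset p'"
    then have v: "v \<in> AA" "p v + pi v = 0" by (auto simp: Kset_def p'_def)
    have "p (p v + pi v) = p v" using lin_add[OF lp] pp[OF v(1)] Kp piK[OF v(1)] by simp
    then have "p v = 0" using v lin_0[OF lp] by simp
    then show "v \<in> ?K" using v by (simp add: Kset_def)
  qed
  obtain v where v: "v \<in> ?K" "q v \<noteq> 0" using nz by blast
  have vn: "v \<notin> Kset p'"
  proof
    assume "v \<in> Kset p'"
    then have "p v + pi v = 0" by (simp add: Kset_def p'_def)
    moreover have "p v = 0" using Kp v(1) .
    ultimately have "q v = 0" by (simp add: pi_def)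
    then show False using v(2) by simp
  qed
  have ne: "Kset p' \<noteq> ?K" using vn v(1) by blast
  have "Kset p' \<subset> ?K" using sub ne by (rule psubsetI)
  then show ?thesis using g' by blast
qed


lemma good_init: "good (\<lambda>v. 0) (\<lambda>v. 0)"
  unfolding good_def using lin_zero AA_0 by simp

lemma good_final: "\<exists>p h. good p h \<and> (\<forall>x. \<exists>k. \<forall>v\<in>Kset p. (br x ^^ k) v = 0)"
proof -
  have "good p h \<Longrightarrow> \<exists>p h. good p h \<and> (\<forall>x. \<exists>k. \<forall>v\<in>Kset p. (br x ^^ k) v = 0)" for p h
  proof (induction "dim (Kset p)" arbitrary: p h rule: less_induct)
    case less
    show ?case
    proof (cases "\<forall>x. \<exists>k. \<forall>v\<in>Kset p. (br x ^^ k) v = 0")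
      case True then show ?thesis using less.prems by blast
    next
      case False
      then obtain x where "\<not> (\<exists>k. \<forall>v\<in>Kset p. (br x ^^ k) v = 0)" by blast
      then obtain p' h' where ph: "good p' h'" "Kset p' \<subset> Kset p"
        using good_step[OF less.prems] by blast
      have e1: "span (Kset p') = Kset p'" using Kset_props(1)[OF ph(1)] by (rule span_eq_iff[THEN iffD2])
      have e2: "span (Kset p) = Kset p" using Kset_props(1)[OF less.prems] by (rule span_eq_iff[THEN iffD2])
      have "span (Kset p') \<subset> span (Kset p)" unfolding e1 e2 by (rule ph(2))
      then have "dim (Kset p') < dim (Kset p)" by (rule dim_psubset)
      then show ?thesis using less.hyps ph(1) by blast
    qed
  qed
  then show ?thesis using good_init by blast
qed

end


context LA begin

lemma nil:
  assumes "finite F"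
  shows "subspace S \<Longrightarrow> S \<subseteq> AA \<Longrightarrow> (\<forall>b\<in>F. \<forall>v\<in>S. br b v \<in> S) \<Longrightarrow>
    (\<forall>b\<in>F. \<exists>k. \<forall>v\<in>S. (br b ^^ k) v = 0) \<Longrightarrow> S \<subseteq> span (\<Union>b\<in>F. br b ` S) \<Longrightarrow> S \<subseteq> {0}"
  using assms
proof (induction F rule: finite_induct)
  case empty then show ?case by simp
next
  case (insert x F)
  define R where "R = span (\<Union>b\<in>F. br b ` S)"
  have Rsub: "subspace R" unfolding R_def by simp
  have Rinv: "br x r \<in> R" if r: "r \<in> R" for r
  proof -
    have "br x ` (\<Union>b\<in>F. br b ` S) \<subseteq> (\<Union>b\<in>F. br b ` S)"
    proof
      fix w assume "w \<in> br x ` (\<Union>b\<in>F. br b ` S)"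
      then obtain b s where bs: "b \<in> F" "s \<in> S" "w = br x (br b s)" by auto
      have "w = br b (br x s)" using bs comm insert.prems(2) by auto
      moreover have "br x s \<in> S" using insert.prems(3) bs by auto
      ultimately show "w \<in> (\<Union>b\<in>F. br b ` S)" using bs by auto
    qed
    then have "span (br x ` (\<Union>b\<in>F. br b ` S)) \<subseteq> R" unfolding R_def by (rule span_mono)
    then show ?thesis using r unfolding R_def lin_span_image[OF linR] by auto
  qed
  have Rinvj: "r \<in> R \<Longrightarrow> (br x ^^ j) r \<in> R" for r j
    by (induction j) (auto simp: Rinv)
  have TS: "span (br x ` S) = br x ` S"
    using lin_subspace_image[OF linR insert.prems(1)] by simp
  have hyp: "S \<subseteq> span (br x ` S \<union> (\<Union>b\<in>F. br b ` S))" using insert.prems(5) by simp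
  have claim: "\<forall>v\<in>S. \<exists>r\<in>R. \<exists>s\<in>S. v = r + (br x ^^ j) s" for j
  proof (induction j)
    case 0
    have "0 \<in> R" using Rsub subspace_0 by blast
    then show ?case by force
  next
    case (Suc j)
    show ?case
    proof
      fix v assume v: "v \<in> S"
      obtain r s where rs: "r \<in> R" "s \<in> S" "v = r + (br x ^^ j) s" using Suc v by blast
      have "s \<in> span (br x ` S \<union> (\<Union>b\<in>F. br b ` S))" using hyp rs(2) by auto
      then obtain a b where ab: "a \<in> br x ` S" "b \<in> R" "s = a + b"
        unfolding span_Un TS R_def by auto
      obtain s' where s': "s' \<in> S" "a = br x s'" using ab(1) by auto
      have e: "(br x ^^ j) (br x s') = (br x ^^ Suc j) s'" unfolding funpow_Suc_right by simp
      have "(br x ^^ j) s = (br x ^^ j) a + (br x ^^ j) b"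
        using ab(3) lin_add[OF lin_pow[OF linR, of j]] by simp
      then have "(br x ^^ j) s = (br x ^^ Suc j) s' + (br x ^^ j) b" using s'(2) e by simp
      then have "v = (r + (br x ^^ j) b) + (br x ^^ Suc j) s'" using rs(3) by (simp only: ac_simps)
      moreover have "r + (br x ^^ j) b \<in> R" using rs(1) Rinvj[OF ab(2)] Rsub subspace_add by blast
      ultimately show "\<exists>r\<in>R. \<exists>s\<in>S. v = r + (br x ^^ Suc j) s" using s'(1) by blast
    qed
  qed
  obtain k where k: "\<forall>v\<in>S. (br x ^^ k) v = 0" using insert.prems(4) by auto
  have SR: "S \<subseteq> R"
  proof
    fix v assume "v \<in> S"
    then obtain r s where "r \<in> R" "s \<in> S" "v = r + (br x ^^ k) s" using claim by blast
    then show "v \<in> R" using k by simp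
  qed
  show ?case
    by (rule insert.IH) (use insert.prems SR R_def in auto)
qed

lemma central:
  assumes g: "good p h" and nilp: "\<forall>x. \<exists>k. \<forall>v\<in>Kset p. (br x ^^ k) v = 0"
  shows "v \<in> AA \<Longrightarrow> br y (v - p v) = 0"
proof -
  let ?K = "Kset p"
  note KP = Kset_props[OF g]
  from g have lp: "lin p" and pA: "\<And>v. v \<in> AA \<Longrightarrow> p v \<in> AA" and pp: "\<And>v. v \<in> AA \<Longrightarrow> p (p v) = p v"
    and pc: "\<And>v y. v \<in> AA \<Longrightarrow> p (br y v) = br y (p v)"
    unfolding good_def by blast+
  define sg where "sg v = v - p v" for v
  have lsg: "lin sg" unfolding sg_def by (rule lin_subf[OF lin_id lp])
  have sgK: "v \<in> AA \<Longrightarrow> sg v \<in> ?K" for v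
    unfolding Kset_def sg_def using AA_diff pA pp lin_diff[OF lp] by auto
  have sgc: "v \<in> AA \<Longrightarrow> sg (br y v) = br y (sg v)" for v y
    unfolding sg_def using pc br_diffR by simp
  define S where "S = span {br y v | y v. v \<in> ?K}"
  have Ssub: "subspace S" unfolding S_def by simp
  have SK: "S \<subseteq> ?K" unfolding S_def by (rule span_minimal) (use KP in auto)
  have SA: "S \<subseteq> AA" using SK KP(2) by auto
  have Sinv: "\<forall>b. \<forall>v\<in>S. br b v \<in> S"
  proof (intro allI ballI)
    fix b v assume v: "v \<in> S"
    have "br b ` {br y v | y v. v \<in> ?K} \<subseteq> {br y v | y v. v \<in> ?K}" using KP(3) by auto
    then have "span (br b ` {br y v | y v. v \<in> ?K}) \<subseteq> S" unfolding S_def by (rule span_mono)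
    then show "br b v \<in> S" using v unfolding S_def lin_span_image[OF linR] by auto
  qed
  define T where "T = span {br z s | z s. s \<in> S}"
  define G3 where "G3 = span {br z u | z u. u \<in> AA}"
  define G4 where "G4 = span {br z w | z w. w \<in> G3}"
  have G34: "G3 \<subseteq> G4" using g34 unfolding G3_def G4_def AA_def .
  have G3A: "G3 \<subseteq> AA" unfolding G3_def by (rule span_minimal) (use AA_sub in auto)
  have sgG3: "sg ` G3 \<subseteq> S"
  proof -
    have "sg ` {br z u | z u. u \<in> AA} \<subseteq> {br y v | y v. v \<in> ?K}"
    proof
      fix w assume "w \<in> sg ` {br z u | z u. u \<in> AA}"
      then obtain z u where zu: "u \<in> AA" "w = sg (br z u)" by auto
      then have "w = br z (sg u)" "sg u \<in> ?K" using sgc sgK by auto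
      then show "w \<in> {br y v | y v. v \<in> ?K}" by blast
    qed
    then have "span (sg ` {br z u | z u. u \<in> AA}) \<subseteq> S" unfolding S_def by (rule span_mono)
    then show ?thesis unfolding G3_def lin_span_image[OF lsg] .
  qed
  have sgG4: "sg ` G4 \<subseteq> T"
  proof -
    have "sg ` {br z w | z w. w \<in> G3} \<subseteq> {br z s | z s. s \<in> S}"
    proof
      fix x assume "x \<in> sg ` {br z w | z w. w \<in> G3}"
      then obtain z w where zw: "w \<in> G3" "x = sg (br z w)" by auto
      then have "x = br z (sg w)" "sg w \<in> S" using sgc G3A sgG3 by auto
      then show "x \<in> {br z s | z s. s \<in> S}" by blast
    qed
    then have "span (sg ` {br z w | z w. w \<in> G3}) \<subseteq> T" unfolding T_def by (rule span_mono)
    then show ?thesis unfolding G4_def lin_span_image[OF lsg] .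
  qed
  have ST: "S \<subseteq> T"
  proof -
    have "{br y v | y v. v \<in> ?K} \<subseteq> T"
    proof
      fix w assume "w \<in> {br y v | y v. v \<in> ?K}"
      then obtain y v where yv: "v \<in> ?K" "w = br y v" by auto
      have vA: "v \<in> AA" and pv: "p v = 0" using yv(1) by (auto simp: Kset_def)
      have "w \<in> G3" unfolding G3_def yv(2) by (rule span_base) (use vA in auto)
      then have "w \<in> G4" using G34 by auto
      moreover have "sg w = w" using yv(2) sgc[OF vA, of y] pv by (simp add: sg_def)
      ultimately show "w \<in> T" using sgG4 by (metis image_subset_iff)
    qed
    then show ?thesis unfolding S_def T_def by (rule span_minimal) simp
  qed
  have TB: "T \<subseteq> span (\<Union>b\<in>Bs. br b ` S)"
  proof -
    have "{br z s | z s. s \<in> S} \<subseteq> span (\<Union>b\<in>Bs. br b ` S)"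
    proof
      fix w assume "w \<in> {br z s | z s. s \<in> S}"
      then obtain z s where zs: "s \<in> S" "w = br z s" by auto
      have l: "lin (\<lambda>z. br z s)" by (rule linL)
      have "w \<in> (\<lambda>z. br z s) ` span Bs" using zs span_Basis by auto
      also have "\<dots> = span ((\<lambda>z. br z s) ` Bs)" using lin_span_image[OF l] by simp
      also have "\<dots> \<subseteq> span (\<Union>b\<in>Bs. br b ` S)" by (rule span_mono) (use zs in auto)
      finally show "w \<in> span (\<Union>b\<in>Bs. br b ` S)" .
    qed
    then show ?thesis unfolding T_def by (rule span_minimal) simp
  qed
  have S0: "S \<subseteq> {0}"
    by (rule nil[OF finite_Basis Ssub SA]) (use Sinv nilp SK ST TB in blast)+
  assume v: "v \<in> AA"
  have "br y (v - p v) \<in> S" unfolding S_def by (rule span_base) (use sgK[OF v] sg_def in auto)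
  then show "br y (v - p v) = 0" using S0 by auto
qed

lemma complement: "\<exists>P. lin P \<and> (\<forall>v\<in>AA. P v = 0) \<and> (\<forall>v. v - P v \<in> AA)"
proof -
  obtain Ba where Ba: "Ba \<subseteq> AA" "independent Ba" "AA \<subseteq> span Ba" "card Ba = dim AA"
    using basis_exists by blast
  obtain B where B: "Ba \<subseteq> B" "B \<subseteq> UNIV" "independent B" "UNIV \<subseteq> span B"
    by (rule maximal_independent_subset_extend[of Ba UNIV]) (use Ba(2) in auto)
  obtain P where P: "lin P" "\<forall>b\<in>B. P b = (if b \<in> Ba then 0 else b)"
    using vp.linear_independent_extend[OF B(3), of "\<lambda>b. if b \<in> Ba then 0 else b"] by blast
  have P0: "P v = 0" if v: "v \<in> AA" for v
  proof -
    have vB: "v \<in> span Ba" using v Ba(3) by blast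
    have eq: "\<And>b. b \<in> Ba \<Longrightarrow> P b = 0" using P(2) B(1) by auto
    show ?thesis using vp.linear_eq_on[OF P(1) lin_zero vB] eq by blast
  qed
  have lsg: "lin (\<lambda>v. v - P v)" by (rule lin_subf[OF lin_id P(1)])
  have im: "(\<lambda>v. v - P v) ` B \<subseteq> AA"
  proof
    fix w assume "w \<in> (\<lambda>v. v - P v) ` B"
    then obtain b where b: "b \<in> B" "w = b - P b" by blast
    show "w \<in> AA"
    proof (cases "b \<in> Ba")
      case True then show ?thesis using b P(2) Ba(1) by auto
    next
      case False then show ?thesis using b P(2) AA_0 by auto
    qed
  qed
  have "span ((\<lambda>v. v - P v) ` B) \<subseteq> AA" using span_minimal[OF im AA_sub] .
  then have "(\<lambda>v. v - P v) ` span B \<subseteq> AA" using lin_span_image[OF lsg, of B] by simp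
  then have "v - P v \<in> AA" for v using B(4) by blast
  then show ?thesis using P(1) P0 by blast
qed

end


context LA begin

lemma half: "scale (1/2) u + scale (1/2) u = u"
proof -
  have "scale (1/2 + 1/2) u = scale (1/2) u + scale (1/2) u" by (rule scale_left_distrib)
  then show ?thesis by simp
qed

lemma LR_exists: "\<exists>prd. is_LR_structure scale br prd"
proof -
  obtain p h where g: "good p h" and nilp: "\<forall>x. \<exists>k. \<forall>v\<in>Kset p. (br x ^^ k) v = 0"
    using good_final by blast
  have cen: "\<And>v y. v \<in> AA \<Longrightarrow> br y (v - p v) = 0" using central[OF g nilp] by blast
  from g have lp: "lin p" and lh: "lin h"
    and pA: "\<And>v. v \<in> AA \<Longrightarrow> p v \<in> AA" and pp: "\<And>v. v \<in> AA \<Longrightarrow> p (p v) = p v"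
    and pc: "\<And>v y. v \<in> AA \<Longrightarrow> p (br y v) = br y (p v)"
    and hA: "\<And>w. h w \<in> AA" and ph: "\<And>w. p (h w) = h w"
    and coc: "\<And>y z. p (br y z) = br y (h z) - br z (h y)"
    unfolding good_def by blast+
  obtain P where lP: "lin P" and P0: "\<And>v. v \<in> AA \<Longrightarrow> P v = 0" and PA: "\<And>v. v - P v \<in> AA"
    using complement by blast
  define B where "B x = P x - h (P x)" for x
  define Q where "Q x = p (x - P x) + h (P x)" for x
  define prd where "prd x y = scale (1/2) (br (B x) (B y)) + br (B x) (Q y)" for x y
  have lB: "lin B" unfolding B_def by (rule lin_subf[OF lP lin_comp[OF lh lP]])
  have lQ: "lin Q" unfolding Q_def
    by (rule lin_addf[OF lin_comp[OF lp lin_subf[OF lin_id lP]] lin_comp[OF lh lP]])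
  have BA: "v \<in> AA \<Longrightarrow> B v = 0" for v using P0 lin_0[OF lh] by (simp add: B_def)
  have QA: "Q x \<in> AA" for x unfolding Q_def using pA[OF PA] hA AA_add by blast
  have pQ: "p (Q z) = Q z" for z unfolding Q_def using lin_add[OF lp] pp[OF PA] ph by simp
  have QonA: "v \<in> AA \<Longrightarrow> Q v = p v" for v using P0 lin_0[OF lh] by (simp add: Q_def)
  have prdA: "prd x y \<in> AA" for x y unfolding prd_def using AA_add AA_scale by simp
  have pBB: "p (br (B y) (B z)) = 0" for y z
  proof -
    define c where "c = P y"
    define d where "d = P z"
    have e: "br (B y) (B z) = br c d - br c (h d) - br (h c) d + br (h c) (h d)"
      by (simp add: B_def c_def d_def br_diffL br_diffR)
    have e1: "p (br c (h d)) = br c (h d)" using pc[OF hA] ph by simp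
    have e2: "p (br (h c) d) = - br d (h c)"
      using br_anti[of "h c" d] lin_neg[OF lp] pc[OF hA] ph by simp
    have e3: "br (h c) (h d) = 0" using ab'[OF hA hA] .
    show ?thesis unfolding e using e1 e2 e3 coc lin_add[OF lp] lin_diff[OF lp] by simp
  qed
  have Qprd: "Q (prd y z) = br (B y) (Q z)" for y z
  proof -
    have "Q (prd y z) = p (prd y z)" using QonA[OF prdA] .
    also have "\<dots> = scale (1/2) (p (br (B y) (B z))) + p (br (B y) (Q z))"
      unfolding prd_def using lin_add[OF lp] lin_scale[OF lp] by simp
    also have "\<dots> = br (B y) (Q z)" using pBB pc[OF QA] pQ by simp
    finally show ?thesis .
  qed
  have Bprd: "B (prd y z) = 0" for y z using BA[OF prdA] .
  define Z where "Z x = (x - P x) - p (x - P x)" for x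
  have Zc1: "br w (Z x) = 0" for w x unfolding Z_def using cen[OF PA] .
  have Zc2: "br (Z x) w = 0" for w x using Zc1 br_anti[of "Z x" w] by simp
  have dec: "x = B x + Q x + Z x" for x by (simp add: B_def Q_def Z_def)
  have QQ: "br (Q x) (Q y) = 0" for x y using ab'[OF QA QA] .
  have brdec: "br x y = br (B x) (B y) + br (B x) (Q y) + br (Q x) (B y)" for x y
  proof -
    have "br x y = br (B x + Q x + Z x) (B y + Q y + Z y)" using dec[of x] dec[of y] by simp
    also have "\<dots> = br (B x) (B y) + br (B x) (Q y) + br (Q x) (B y)"
      by (simp add: br_addL br_addR Zc1 Zc2 QQ)
    finally show ?thesis .
  qed
  show ?thesis
  proof (intro exI[of _ prd])
    show "is_LR_structure scale br prd"
      unfolding is_LR_structure_def bilinear_map_def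
    proof (intro conjI allI)
      fix x
      have e: "prd x = (\<lambda>y. scale (1/2) (br (B x) (B y)) + br (B x) (Q y))"
        by (simp add: prd_def fun_eq_iff)
      have "lin (\<lambda>y. scale (1/2) (br (B x) (B y)) + br (B x) (Q y))"
        by (rule lin_addf[OF lin_scalef[OF lin_comp[OF linR lB]] lin_comp[OF linR lQ]])
      then show "lin (prd x)" unfolding e .
    next
      fix y
      have "lin (\<lambda>x. scale (1/2) (br (B x) (B y)) + br (B x) (Q y))"
        by (rule lin_addf[OF lin_scalef[OF lin_comp[OF linL lB]] lin_comp[OF linL lB]])
      then show "lin (\<lambda>x. prd x y)" unfolding prd_def .
    next
      fix x y z
      have "prd x (prd y z) = scale (1/2) (br (B x) (B (prd y z))) + br (B x) (Q (prd y z))"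
        by (rule prd_def)
      also have "\<dots> = br (B x) (br (B y) (Q z))" unfolding Bprd Qprd by simp
      finally have l1: "prd x (prd y z) = br (B x) (br (B y) (Q z))" .
      have "prd y (prd x z) = scale (1/2) (br (B y) (B (prd x z))) + br (B y) (Q (prd x z))"
        by (rule prd_def)
      also have "\<dots> = br (B y) (br (B x) (Q z))" unfolding Bprd Qprd by simp
      finally have l2: "prd y (prd x z) = br (B y) (br (B x) (Q z))" .
      show "prd x (prd y z) = prd y (prd x z)" unfolding l1 l2 by (rule comm[OF QA])
    next
      fix x y z
      have r1: "prd (prd x y) z = 0" unfolding prd_def[of "prd x y"] Bprd by simp
      have r2: "prd (prd x z) y = 0" unfolding prd_def[of "prd x z"] Bprd by simp
      show "prd (prd x y) z = prd (prd x z) y" unfolding r1 r2 ..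
    next
      fix x y
      have a1: "br (B y) (B x) = - br (B x) (B y)" by (rule br_anti)
      have a2: "br (B y) (Q x) = - br (Q x) (B y)" by (rule br_anti)
      have "prd x y - prd y x = scale (1/2) (br (B x) (B y)) + br (B x) (Q y)
          - (scale (1/2) (- br (B x) (B y)) + - br (Q x) (B y))"
        unfolding prd_def a1 a2 ..
      also have "\<dots> = (scale (1/2) (br (B x) (B y)) + scale (1/2) (br (B x) (B y)))
          + br (B x) (Q y) + br (Q x) (B y)"
        unfolding scale_minus_right by (simp only: diff_conv_add_uminus minus_add_distrib minus_minus ac_simps)
      finally have "prd x y - prd y x = (scale (1/2) (br (B x) (B y)) + scale (1/2) (br (B x) (B y)))
          + br (B x) (Q y) + br (Q x) (B y)" .
      then show "prd x y - prd y x = br x y" using half[of "br (B x) (B y)"] brdec[of x y] by simp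
    qed
  qed
qed

end

theorem mainTheorem13:
  fixes scale :: "'k::field_char_0 \<Rightarrow> 'v::ab_group_add \<Rightarrow> 'v"
    and br :: "'v \<Rightarrow> 'v \<Rightarrow> 'v"
  assumes "lie_algebra scale br"
    and "finite_dim scale"
    and "two_step_solvable scale br"
    and "lower_central_inf scale br = lower_central scale br 3"
  shows "\<exists>p. is_LR_structure scale br p"
proof -
  obtain Bs where fd: "finite_dimensional_vector_space scale Bs"
    using assms(2) unfolding finite_dim_def by blast
  have la: "vector_space scale" "bilinear_map scale br" "\<And>x. br x x = 0"
    "\<And>x y z. br x (br y z) + br y (br z x) + br z (br x y) = 0"
    using assms(1) unfolding lie_algebra_def by blast+
  have "lower_central_inf scale br \<subseteq> lower_central scale br (Suc 3)"
    unfolding lower_central_inf_def by (rule INT_lower) simp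
  then have "lower_central scale br 3 \<subseteq> lower_central scale br (Suc 3)"
    using assms(4) by simp
  then have g34: "module.span scale {br z u | z u. u \<in> module.span scale {br x y | x y. True}}
       \<subseteq> module.span scale {br z w | z w. w \<in> module.span scale {br z u | z u. u \<in> module.span scale {br x y | x y. True}}}"
    by (simp add: numeral_3_eq_3)
  have "LA scale Bs br"
    unfolding LA_def LA_axioms_def
    using fd la assms(3) g34 unfolding bilinear_map_def two_step_solvable_def derived_algebra_def
    by blast
  then show ?thesis by (rule LA.LR_exists)
qed

end
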